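(* Let $\Omega$ be an open subset of $\mathbb{H}$ such that, for every $I\in\mathbb{S}$, $\Omega_I=\Omega\cap L_I$ is an angle $\{re^{I(\zeta_I+\vartheta)}: r>0,\ |\vartheta|<\varphi_I/2\}$ with $\zeta_I\in\mathbb{R}$ and $0<\varphi_I<2\pi$. If the maps $\mathbb{S}\to\mathbb{R}$, $I\mapsto\zeta_I$ and $I\mapsto\varphi_I$ are continuous, then $\Omega$ is a slice domain.
   Context: $\mathbb{H}$ denotes the quaternions; $\mathbb{S}=\{ix_1+jx_2+kx_3: x_1^2+x_2^2+x_3^2=1\}$ (a 2-sphere); for $I\in\mathbb{S}$, $L_I=\mathbb{R}+\mathbb{R}I$ and $e^{I\vartheta}=\cos\vartheta+I\sin\vartheta$. A domain $\Omega\subseteq\mathbb{H}$ is a slice domain if $\Omega\cap\mathbb{R}\ne\emptyset$ and $\Omega\cap L_I$ is a domain (open connected set) in $L_I$ for every $I\in\mathbb{S}$. (Here "slice domain" is understood to include that $\Omega$ is a domain.) *)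

theory Defs
  imports "HOL-Analysis.Analysis"
begin

text \<open>Quaternions modelled as the real vector space real^4 with basis 1, i, j, k
  (coordinate 1 = real part). Only the real-linear structure and the Euclidean
  topology are needed for this statement.\<close>

type_synonym quat = "real^4"

definition qone :: quat where "qone = axis 1 1"

definition qreal :: "real \<Rightarrow> quat" where "qreal a = a *\<^sub>R qone"

definition sphS :: "quat set" where
  "sphS = {q. q $ 1 = 0 \<and> (q $ 2)\<^sup>2 + (q $ 3)\<^sup>2 + (q $ 4)\<^sup>2 = 1}"

definition sliceL :: "quat \<Rightarrow> quat set" where
  "sliceL I = {a *\<^sub>R qone + b *\<^sub>R I | a b. True}"

definition qexpI :: "quat \<Rightarrow> real \<Rightarrow> quat" where
  "qexpI I t = cos t *\<^sub>R qone + sin t *\<^sub>R I"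

definition angle_set :: "quat \<Rightarrow> real \<Rightarrow> real \<Rightarrow> quat set" where
  "angle_set I \<zeta> \<phi> = {r *\<^sub>R qexpI I (\<zeta> + \<theta>) | r \<theta>. r > 0 \<and> \<bar>\<theta>\<bar> < \<phi> / 2}"

definition slice_domain :: "quat set \<Rightarrow> bool" where
  "slice_domain \<Omega> \<longleftrightarrow> open \<Omega> \<and> connected \<Omega> \<and> \<Omega> \<inter> range qreal \<noteq> {} \<and>
     (\<forall>I\<in>sphS. openin (top_of_set (sliceL I)) (\<Omega> \<inter> sliceL I) \<and>
                connected (\<Omega> \<inter> sliceL I) \<and> \<Omega> \<inter> sliceL I \<noteq> {})"

end

theory Submission
  imports Defs
begin

lemma qone_nth: "qone $ i = (if i = 1 then 1 else 0)" by (simp add: qone_def axis_def)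

definition f3 :: "real^3 \<Rightarrow> real^4" where
  "f3 = (\<lambda>x::real^3. (\<chi> i::4. if i=1 then 0 else if i=2 then x$1 else if i=3 then x$2 else x$3))"

lemma f3_nth: "f3 x $ 1 = 0" "f3 x $ 2 = x$1" "f3 x $ 3 = x$2" "f3 x $ 4 = x$3"
  by (simp_all add: f3_def)

lemma f3_cont: "continuous_on UNIV f3"
  unfolding f3_def
proof (intro continuous_on_vec_lambda)
  fix i :: 4
  show "continuous_on UNIV (\<lambda>x::real^3. if i = 1 then 0 else if i = 2 then x $ 1 else if i = 3 then x $ 2 else x $ 3)"
    by (cases "i = 1"; cases "i = 2"; cases "i = 3") (simp_all add: continuous_on_component continuous_on_id)
qed

lemma sphS_conn: "connected sphS"
proof -
  have "sphS = f3 ` sphere 0 1"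
  proof
    show "f3 ` sphere 0 1 \<subseteq> sphS"
      by (auto simp: f3_nth sphS_def norm_vec_def L2_set_def sum_3)
  next
    show "sphS \<subseteq> f3 ` sphere 0 1"
    proof
      fix q assume q: "q \<in> sphS"
      define x where "x = (\<chi> j::3. if j=1 then q$2 else if j=2 then q$3 else q$4)"
      have "x \<in> sphere 0 1" using q unfolding x_def by (simp add: sphS_def norm_vec_def L2_set_def sum_3)
      moreover have "f3 x = q" using q unfolding x_def vec_eq_iff forall_4 by (simp add: f3_nth sphS_def)
      ultimately show "q \<in> f3 ` sphere 0 1" by (metis image_eqI)
    qed
  qed
  moreover have "connected (f3 ` sphere (0::real^3) 1)"
    by (rule connected_continuous_image[OF continuous_on_subset[OF f3_cont subset_UNIV]]) (simp add: connected_sphere_eq)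
  ultimately show ?thesis by simp
qed

lemma sphS_neg: "I \<in> sphS \<Longrightarrow> -I \<in> sphS" by (simp add: sphS_def)

lemma sliceL_neg: "sliceL (-I) = sliceL I"
proof -
  have "a *\<^sub>R qone + b *\<^sub>R (-I) = a *\<^sub>R qone + (-b) *\<^sub>R I" for a b by simp
  then show ?thesis unfolding sliceL_def by (metis (no_types, opaque_lifting) minus_minus)
qed

lemma sphS_comp: assumes "I \<in> sphS" obtains k where "k \<noteq> 1" "I $ k \<noteq> 0"
proof -
  have "I $ 2 \<noteq> 0 \<or> I $ 3 \<noteq> 0 \<or> I $ 4 \<noteq> 0" using assms by (auto simp: sphS_def)
  then show ?thesis
  proof (elim disjE)
    assume "I $ 2 \<noteq> 0" then show ?thesis by (rule that[of 2, rotated]) simp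
  next
    assume "I $ 3 \<noteq> 0" then show ?thesis by (rule that[of 3, rotated]) simp
  next
    assume "I $ 4 \<noteq> 0" then show ?thesis by (rule that[of 4, rotated]) simp
  qed
qed

lemma coef:
  assumes "I \<in> sphS" "a *\<^sub>R qone + b *\<^sub>R I = c *\<^sub>R qone + d *\<^sub>R I"
  shows "b = d"
proof -
  obtain k where k: "k \<noteq> 1" "I $ k \<noteq> 0" using sphS_comp[OF assms(1)] by blast
  have "(a *\<^sub>R qone + b *\<^sub>R I) $ k = (c *\<^sub>R qone + d *\<^sub>R I) $ k" using assms(2) by simp
  then have "b * I $ k = d * I $ k" using k by (simp add: qone_nth)
  then show ?thesis using k by simp
qed

lemma axis2_sphS: "axis 2 1 \<in> sphS" by (simp add: sphS_def axis_def)

lemma cover: "\<exists>I\<in>sphS. q \<in> sliceL I"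
proof -
  define s where "s = sqrt ((q$2)\<^sup>2 + (q$3)\<^sup>2 + (q$4)\<^sup>2)"
  have s2: "s\<^sup>2 = (q$2)\<^sup>2 + (q$3)\<^sup>2 + (q$4)\<^sup>2" unfolding s_def by simp
  show ?thesis
  proof (cases "s = 0")
    case True
    then have z: "q$2 = 0" "q$3 = 0" "q$4 = 0" using s2 by (simp_all add: sum_power2_eq_zero_iff add_nonneg_eq_0_iff)
    have "q = (q$1) *\<^sub>R qone + 0 *\<^sub>R axis 2 1"
      unfolding vec_eq_iff forall_4 using z by (simp add: qone_nth axis_def)
    then show ?thesis using axis2_sphS unfolding sliceL_def by blast
  next
    case False
    define I where "I = (\<chi> i::4. if i = 1 then 0 else q$i / s)"
    have "I \<in> sphS"
    proof -
      have "(q$2/s)\<^sup>2 + (q$3/s)\<^sup>2 + (q$4/s)\<^sup>2 = ((q$2)\<^sup>2 + (q$3)\<^sup>2 + (q$4)\<^sup>2) / s\<^sup>2" by (simp add: power_divide add_divide_distrib)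
      also have "\<dots> = 1" using False s2 by (metis divide_self power_not_zero)
      finally have "(q$2/s)\<^sup>2 + (q$3/s)\<^sup>2 + (q$4/s)\<^sup>2 = 1" .
      then show ?thesis by (simp add: sphS_def I_def)
    qed
    moreover have "q = (q$1) *\<^sub>R qone + s *\<^sub>R I"
      unfolding vec_eq_iff forall_4 using False by (simp add: qone_nth I_def)
    ultimately show ?thesis unfolding sliceL_def by blast
  qed
qed

lemma qexp_in: "0 < \<phi> \<Longrightarrow> qexpI I \<zeta> \<in> angle_set I \<zeta> \<phi>"
  unfolding angle_set_def by (rule CollectI, rule exI[of _ 1], rule exI[of _ 0]) simp

lemma angle_conn: "connected (angle_set I \<zeta> \<phi>)"
proof -
  have eq: "angle_set I \<zeta> \<phi> = (\<lambda>p. fst p *\<^sub>R qexpI I (\<zeta> + snd p)) ` ({0<..} \<times> {-\<phi>/2<..<\<phi>/2})" (is "_ = ?R")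
  proof
    show "angle_set I \<zeta> \<phi> \<subseteq> ?R"
    proof
      fix x assume "x \<in> angle_set I \<zeta> \<phi>"
      then obtain r \<theta> where "x = r *\<^sub>R qexpI I (\<zeta> + \<theta>)" "r > 0" "\<bar>\<theta>\<bar> < \<phi> / 2"
        unfolding angle_set_def by blast
      then show "x \<in> ?R" by (intro image_eqI[of _ _ "(r, \<theta>)"]) (auto simp: abs_less_iff)
    qed
    show "?R \<subseteq> angle_set I \<zeta> \<phi>"
    proof
      fix x assume "x \<in> ?R"
      then obtain a b where "x = a *\<^sub>R qexpI I (\<zeta> + b)" "a > 0" "\<bar>b\<bar> < \<phi> / 2"
        by (auto simp: abs_less_iff)
      then show "x \<in> angle_set I \<zeta> \<phi>" unfolding angle_set_def by blast
    qed
  qed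
  have "continuous_on UNIV (\<lambda>p::real\<times>real. fst p *\<^sub>R qexpI I (\<zeta> + snd p))"
    unfolding qexpI_def by (intro continuous_intros)
  moreover have "connected ({(0::real)<..} \<times> {-\<phi>/2<..<\<phi>/2::real})"
    by (rule convex_connected, rule convex_Times) (auto intro: convex_real_interval)
  ultimately show ?thesis unfolding eq using connected_continuous_image[OF continuous_on_subset[OF _ subset_UNIV]] by blast
qed

lemma zero_between:
  fixes U :: "real set"
  assumes "connected U" "x \<in> U" "y \<in> U" "0 < x" "y < 0"
  shows "0 \<in> U"
  using connectedD_interval[OF assms(1) assms(3) assms(2)] assms(4,5) by simp

lemma zero_between2:
  fixes U :: "real set"
  assumes "connected U" "x \<in> U" "y \<in> U" "x \<noteq> 0" "y \<noteq> 0" "(0 < x) = (\<not> 0 < y)"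
  shows "0 \<in> U"
proof (cases "0 < x")
  case True
  then have "y < 0" using assms(5,6) by linarith
  then show ?thesis using zero_between[OF assms(1,2,3) True] by blast
next
  case False
  then have "x < 0" "0 < y" using assms(4,6) by linarith+
  then show ?thesis using zero_between[OF assms(1,3,2)] by blast
qed

lemma sign_const:
  fixes c z \<theta> :: real
  assumes nz: "\<forall>t. \<bar>t\<bar> < c \<longrightarrow> sin (z + t) \<noteq> 0" and th: "\<bar>\<theta>\<bar> < c"
  shows "(0 < sin (z + \<theta>)) = (0 < sin z)"
proof (rule ccontr)
  assume ne: "(0 < sin (z + \<theta>)) \<noteq> (0 < sin z)"
  have c0: "0 < c" using order_le_less_trans[OF abs_ge_zero th] .
  have a: "sin (z + \<theta>) \<noteq> 0" using nz th by blast
  have b: "sin z \<noteq> 0" using nz[rule_format, of 0] c0 by simp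
  define U where "U = (\<lambda>t. sin (z + t)) ` {-c<..<c}"
  have "connected U" unfolding U_def
    by (intro connected_continuous_image) (auto intro!: continuous_intros)
  moreover have "sin (z + \<theta>) \<in> U" "sin z \<in> U" unfolding U_def using th c0
    by (auto simp: abs_less_iff intro!: image_eqI[of _ _ 0])
  ultimately have "0 \<in> U" using ne a b zero_between2 by blast
  then show False using nz unfolding U_def by (auto simp: abs_less_iff)
qed

theorem proposition4p3:
  fixes \<Omega> :: "quat set" and \<zeta> \<phi> :: "quat \<Rightarrow> real"
  assumes "open \<Omega>"
    and "\<forall>I\<in>sphS. \<Omega> \<inter> sliceL I = angle_set I (\<zeta> I) (\<phi> I) \<and> 0 < \<phi> I \<and> \<phi> I < 2 * pi"
    and "continuous_on sphS \<zeta>"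
    and "continuous_on sphS \<phi>"
  shows "slice_domain \<Omega>"
proof -
  note H = assms(2)
  have ph: "0 < \<phi> I" if "I \<in> sphS" for I using H that by blast
  have eqA: "\<Omega> \<inter> sliceL I = angle_set I (\<zeta> I) (\<phi> I)" if "I \<in> sphS" for I using H that by blast
  have real_pt: "\<Omega> \<inter> range qreal \<noteq> {}"
  proof
    assume NR: "\<Omega> \<inter> range qreal = {}"
    have S1: "\<forall>t. \<bar>t\<bar> < \<phi> I / 2 \<longrightarrow> sin (\<zeta> I + t) \<noteq> 0" if I: "I \<in> sphS" for I
    proof (intro allI impI notI)
      fix t assume t: "\<bar>t\<bar> < \<phi> I / 2" and s: "sin (\<zeta> I + t) = 0"
      have "qexpI I (\<zeta> I + t) = 1 *\<^sub>R qexpI I (\<zeta> I + t) \<and> (1::real) > 0 \<and> \<bar>t\<bar> < \<phi> I / 2"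
        using t by simp
      then have "qexpI I (\<zeta> I + t) \<in> angle_set I (\<zeta> I) (\<phi> I)"
        unfolding angle_set_def by blast
      then have "qexpI I (\<zeta> I + t) \<in> \<Omega>" using eqA[OF I] by blast
      moreover have "qexpI I (\<zeta> I + t) = qreal (cos (\<zeta> I + t))"
        using s by (simp add: qexpI_def qreal_def)
      ultimately show False using NR by blast
    qed
    have opp: "(0 < sin (\<zeta> I)) = (\<not> 0 < sin (\<zeta> (-I)))" if I: "I \<in> sphS" for I
    proof -
      have nI: "-I \<in> sphS" using sphS_neg I .
      have "qexpI I (\<zeta> I) \<in> \<Omega> \<inter> sliceL I" using eqA[OF I] qexp_in[OF ph[OF I]] by simp
      then have "qexpI I (\<zeta> I) \<in> angle_set (-I) (\<zeta> (-I)) (\<phi> (-I))"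
      proof -
        have "\<Omega> \<inter> sliceL I = angle_set (-I) (\<zeta> (-I)) (\<phi> (-I))"
          using eqA[OF nI] sliceL_neg[of I] by simp
        then show ?thesis using \<open>qexpI I (\<zeta> I) \<in> \<Omega> \<inter> sliceL I\<close> by blast
      qed
      then obtain r \<theta> where r: "r > 0" "\<bar>\<theta>\<bar> < \<phi> (-I) / 2"
        and eq: "qexpI I (\<zeta> I) = r *\<^sub>R qexpI (-I) (\<zeta> (-I) + \<theta>)"
        unfolding angle_set_def by blast
      have "cos (\<zeta> I) *\<^sub>R qone + sin (\<zeta> I) *\<^sub>R I
          = (r * cos (\<zeta> (-I) + \<theta>)) *\<^sub>R qone + (- (r * sin (\<zeta> (-I) + \<theta>))) *\<^sub>R I"
      proof -
        have "r *\<^sub>R qexpI (-I) (\<zeta> (-I) + \<theta>) = (r * cos (\<zeta> (-I) + \<theta>)) *\<^sub>R qone + (- (r * sin (\<zeta> (-I) + \<theta>))) *\<^sub>R I"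
          unfolding qexpI_def by (simp add: scaleR_add_right scaleR_diff_right)
        then show ?thesis using eq unfolding qexpI_def by simp
      qed
      then have sI: "sin (\<zeta> I) = - (r * sin (\<zeta> (-I) + \<theta>))" by (rule coef[OF I])
      have nz: "sin (\<zeta> (-I) + \<theta>) \<noteq> 0" using S1[OF nI] r by blast
      have sc: "(0 < sin (\<zeta> (-I) + \<theta>)) = (0 < sin (\<zeta> (-I)))"
        using sign_const[OF S1[OF nI] r(2)] .
      have "(0 < sin (\<zeta> I)) = (sin (\<zeta> (-I) + \<theta>) < 0)"
        using sI r(1) by (simp add: mult_less_0_iff)
      also have "\<dots> = (\<not> 0 < sin (\<zeta> (-I) + \<theta>))" using nz by linarith
      finally show ?thesis using sc by simp
    qed
    define U where "U = (\<lambda>I. sin (\<zeta> I)) ` sphS"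
    have "connected U" unfolding U_def
    proof (rule connected_continuous_image[OF _ sphS_conn])
      show "continuous_on sphS (\<lambda>I. sin (\<zeta> I))" using assms(3) by (intro continuous_intros)
    qed
    moreover have m: "sin (\<zeta> (axis 2 1)) \<in> U" "sin (\<zeta> (- axis 2 1)) \<in> U"
      unfolding U_def by (intro imageI axis2_sphS sphS_neg)+
    moreover have "sin (\<zeta> (axis 2 1)) \<noteq> 0" "sin (\<zeta> (- axis 2 1)) \<noteq> 0"
      using S1[OF axis2_sphS, rule_format, of 0] S1[OF sphS_neg[OF axis2_sphS], rule_format, of 0]
        ph[OF axis2_sphS] ph[OF sphS_neg[OF axis2_sphS]] by simp_all
    moreover note opp[OF axis2_sphS]
    ultimately have "0 \<in> U" by (rule zero_between2)
    then obtain I where I: "I \<in> sphS" "sin (\<zeta> I) = 0" unfolding U_def by (metis (no_types, lifting) imageE)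
    then show False using S1[OF I(1), rule_format, of 0] ph[OF I(1)] by simp
  qed
  then obtain a where a: "qreal a \<in> \<Omega>" by auto
  have inL: "qreal a \<in> sliceL I" for I unfolding sliceL_def qreal_def
    by (rule CollectI, rule exI[of _ a], rule exI[of _ 0]) simp
  have conn: "connected \<Omega>"
  proof -
    have "\<Omega> = \<Union> ((\<lambda>I. \<Omega> \<inter> sliceL I) ` sphS)"
    proof (intro equalityI subsetI)
      fix q assume q: "q \<in> \<Omega>"
      obtain I where "I \<in> sphS" "q \<in> sliceL I" using cover[of q] by (elim bexE)
      then show "q \<in> \<Union> ((\<lambda>I. \<Omega> \<inter> sliceL I) ` sphS)" using q by (intro UnionI[OF imageI]) auto
    next
      fix q assume "q \<in> \<Union> ((\<lambda>I. \<Omega> \<inter> sliceL I) ` sphS)"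
      then show "q \<in> \<Omega>" by (elim UnionE imageE) simp
    qed
    moreover have "connected (\<Union> ((\<lambda>I. \<Omega> \<inter> sliceL I) ` sphS))"
    proof (rule connected_Union)
      show "connected s" if s_in: "s \<in> (\<lambda>I. \<Omega> \<inter> sliceL I) ` sphS" for s
      proof -
        obtain I where "I \<in> sphS" "s = \<Omega> \<inter> sliceL I" using s_in by (elim imageE) simp
        then show ?thesis using eqA angle_conn by simp
      qed
      show "\<Inter> ((\<lambda>I. \<Omega> \<inter> sliceL I) ` sphS) \<noteq> {}" using a inL by blast
    qed
    ultimately show ?thesis by simp
  qed
  show ?thesis
    unfolding slice_domain_def
  proof (intro conjI ballI)
    fix I assume I: "I \<in> sphS"
    show "openin (top_of_set (sliceL I)) (\<Omega> \<inter> sliceL I)"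
      using openin_open_Int[OF assms(1), of "sliceL I"] by (simp add: Int_commute)
    show "connected (\<Omega> \<inter> sliceL I)" using eqA[OF I] angle_conn by simp
    show "\<Omega> \<inter> sliceL I \<noteq> {}" using a inL by blast
  qed (fact assms(1) conn real_pt)+
qed

end
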